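(* Consider the periodic robust learning MPC scheme described in the context, and suppose the following assumption holds: a closed-loop trajectory $\{\mathbf{z}^0,\mathbf{v}^0\}$ of iteration $0$ (with disturbance parameter $\theta^0$) is given which satisfies the nominal dynamics and the tightened constraints, and the feasible disturbance sets of iteration $0$ satisfy $\mathbb{W}_t^0 \supseteq \mathbb{W}_\theta$ for all $t\in\{0,\dots,T\}$. Then for every iteration $j\geq 1$ and every time step $t$ at which the LMPC problem is solved (i.e. every $t\in\{0,1,\dots,T-N\}$), the LMPC optimization problem at time $t$ of iteration $j$ is feasible.
   Context: Let $T\in\mathbb{N}$ be the period/task length and $N\le T$ the prediction horizon; $\mathbb{N}_a^b=\{a,a+1,\dots,b\}$. For $t\in\mathbb{N}_0^T$ let $A_t\in\mathbb{R}^{n\times n}$, $B_t\in\mathbb{R}^{n\times m}$, $C_t\in\mathbb{R}^{n\times d}$ be given, together with tightened constraint data $\bar F_t,\bar G_t,\bar f_t$ (polytopic constraints $\bar F_t z+\bar G_t v\le \bar f_t$), gains $K_t$ and $\Phi_t=A_t+B_tK_t$. Let $(\theta,t)\mapsto w_{\theta,t}\in\mathbb{R}^d$ be a given (known) parametrized disturbance profile (e.g. a truncated Fourier series $w_{\theta,t}=a_0+\sum_{q=1}^M a_q\sin(2\pi qt/T)+b_q\cos(2\pi qt/T)$ with $\theta=(a_0,a_q,b_q)_q$), with parameters $\theta$ ranging in a set $\mathbb{W}_\theta$. Each iteration $j=0,1,2,\dots$ has a parameter $\theta^j\in\mathbb{W}_\theta$, known at iteration $j$, and nominal dynamics $z_{k+1}=A_kz_k+B_kv_k+C_kw_{\theta^j,k}$,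 all iterations starting from $z_0^j=x_s$. Stage costs $l_t(z,v)$ are given. Shifting: for a past iteration $i$ with recorded closed-loop states $\mathbf{z}^i=[z_0^i,\dots,z_T^i]$, inputs $\mathbf{v}^i=[v_0^i,\dots,v_T^i]$ and parameter $\theta^i$, a parameter $\theta$ and a start time $t$, define $e_{t|t}=0$, $e_{k+1|t}=\Phi_k e_{k|t}+C_k(w_{\theta,k}-w_{\theta^i,k})$, $v_{k|t}=v_k^i+K_ke_{k|t}$, $z_{k|t}=z_k^i+e_{k|t}$ for $k\in\mathbb{N}_t^T$; when $\theta=\theta^j$ these are denoted $z_{k|t}^{i,j},v_{k|t}^{i,j}$. The feasible disturbance set $\mathbb{W}_t^i$ is the set of $\theta$ for which the resulting shifted pairs satisfy $\bar F_k z_{k|t}+\bar G_k v_{k|t}\le \bar f_k$ for all $k\in\mathbb{N}_t^T$. Safe sets and cost-to-go at iteration $j$: $\mathbb{SS}_k^j=\{z_{k|t}^{i,j}: i\in\mathbb{N}_0^{j-1},\ t\in\mathbb{N}_0^k,\ \theta^j\in\mathbb{W}_t^i\}$ (a finite set of points), shifted costs $J_{k|t}^{i,j}=\sum_{r=k}^T l_r(z_{r|t}^{i,j},v_{r|t}^{i,j})$, and $Q_k^j(z)=\min\{J_{k|t}^{i,j}: i\in\mathbb{N}_0^{j-1}, t\in\mathbb{N}_0^k, \theta^j\in\mathbb{W}_t^i, z_{k|t}^{i,j}=z\}$ if $z\in\mathbb{SS}_k^j$, and $Q_k^j(z)=+\infty$ otherwise. LMPC problem at time $t\in\mathbb{N}_0^{T-N}$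 of iteration $j$, given current nominal state $z_t^j$: minimize $\sum_{k=t}^{t+N-1}l_k(z_{k|t},v_{k|t})+Q_{t+N}^j(z_{t+N|t})$ over $v_{t|t},\dots,v_{t+N-1|t}$ subject to $z_{t|t}=z_t^j$, $z_{k+1|t}=A_kz_{k|t}+B_kv_{k|t}+C_kw_{\theta^j,k}$, $\bar F_kz_{k|t}+\bar G_kv_{k|t}\le\bar f_k$ for $k\in\mathbb{N}_t^{t+N-1}$, and $z_{t+N|t}\in\mathbb{SS}_{t+N}^j$. With optimal inputs $v^{j,*}_{k|t}$, the closed-loop input is $v_t^j=v_{t|t}^{j,*}$ if $t+N\le T$ and $v_t^j=v_{t|T-N}^{j,*}$ if $t+N>T$, and $z_{t+1}^j=A_tz_t^j+B_tv_t^j+C_tw_{\theta^j,t}$. The closed-loop $\{\mathbf{z}^j,\mathbf{v}^j\}$ together with $\theta^j$ is recorded and used as historical data for later iterations. *)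

theory Defs
  imports "HOL-Analysis.Analysis" "HOL-Library.Extended_Real"
begin

text \<open>The order on real^'p is componentwise.\<close>

definition Phi :: "(nat \<Rightarrow> real^'n^'n) \<Rightarrow> (nat \<Rightarrow> real^'m^'n) \<Rightarrow> (nat \<Rightarrow> real^'n^'m)
    \<Rightarrow> nat \<Rightarrow> real^'n^'n" where
  "Phi A B K k = A k + B k ** K k"

definition cons_ok :: "(nat \<Rightarrow> real^'n^'p) \<Rightarrow> (nat \<Rightarrow> real^'m^'p) \<Rightarrow> (nat \<Rightarrow> real^'p)
    \<Rightarrow> nat \<Rightarrow> real^'n \<Rightarrow> real^'m \<Rightarrow> bool" where
  "cons_ok F G f k z v \<longleftrightarrow> F k *v z + G k *v v \<le> f k"

text \<open>Shifting error: shift_err ... t n = e_{t+n|t}.\<close>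
primrec shift_err :: "(nat \<Rightarrow> real^'n^'n) \<Rightarrow> (nat \<Rightarrow> real^'m^'n) \<Rightarrow> (nat \<Rightarrow> real^'d^'n)
    \<Rightarrow> (nat \<Rightarrow> real^'n^'m) \<Rightarrow> ('th \<Rightarrow> nat \<Rightarrow> real^'d) \<Rightarrow> 'th \<Rightarrow> 'th \<Rightarrow> nat \<Rightarrow> nat \<Rightarrow> real^'n"
  where
  "shift_err A B C K w \<theta> \<theta>i t 0 = 0"
| "shift_err A B C K w \<theta> \<theta>i t (Suc n) =
     Phi A B K (t + n) *v shift_err A B C K w \<theta> \<theta>i t n + C (t + n) *v (w \<theta> (t + n) - w \<theta>i (t + n))"

text \<open>Shifted states z_{k|t} and inputs v_{k|t} (meaningful for k >= t) of past trajectory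
  (zi, vi, \<theta>i) for parameter \<theta>.\<close>
definition shift_z :: "(nat \<Rightarrow> real^'n^'n) \<Rightarrow> (nat \<Rightarrow> real^'m^'n) \<Rightarrow> (nat \<Rightarrow> real^'d^'n)
    \<Rightarrow> (nat \<Rightarrow> real^'n^'m) \<Rightarrow> ('th \<Rightarrow> nat \<Rightarrow> real^'d)
    \<Rightarrow> (nat \<Rightarrow> real^'n) \<Rightarrow> 'th \<Rightarrow> 'th \<Rightarrow> nat \<Rightarrow> nat \<Rightarrow> real^'n" where
  "shift_z A B C K w zi \<theta>i \<theta> t k = zi k + shift_err A B C K w \<theta> \<theta>i t (k - t)"

definition shift_v :: "(nat \<Rightarrow> real^'n^'n) \<Rightarrow> (nat \<Rightarrow> real^'m^'n) \<Rightarrow> (nat \<Rightarrow> real^'d^'n)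
    \<Rightarrow> (nat \<Rightarrow> real^'n^'m) \<Rightarrow> ('th \<Rightarrow> nat \<Rightarrow> real^'d)
    \<Rightarrow> (nat \<Rightarrow> real^'m) \<Rightarrow> 'th \<Rightarrow> 'th \<Rightarrow> nat \<Rightarrow> nat \<Rightarrow> real^'m" where
  "shift_v A B C K w vi \<theta>i \<theta> t k = vi k + K k *v shift_err A B C K w \<theta> \<theta>i t (k - t)"

definition feas_W :: "(nat \<Rightarrow> real^'n^'n) \<Rightarrow> (nat \<Rightarrow> real^'m^'n) \<Rightarrow> (nat \<Rightarrow> real^'d^'n)
    \<Rightarrow> (nat \<Rightarrow> real^'n^'m) \<Rightarrow> (nat \<Rightarrow> real^'n^'p) \<Rightarrow> (nat \<Rightarrow> real^'m^'p) \<Rightarrow> (nat \<Rightarrow> real^'p)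
    \<Rightarrow> ('th \<Rightarrow> nat \<Rightarrow> real^'d) \<Rightarrow> nat
    \<Rightarrow> (nat \<Rightarrow> real^'n) \<Rightarrow> (nat \<Rightarrow> real^'m) \<Rightarrow> 'th \<Rightarrow> nat \<Rightarrow> 'th set" where
  "feas_W A B C K F G f w T zi vi \<theta>i t =
     {\<theta>. \<forall>k\<in>{t..T}. cons_ok F G f k (shift_z A B C K w zi \<theta>i \<theta> t k) (shift_v A B C K w vi \<theta>i \<theta> t k)}"

definition safe_set :: "(nat \<Rightarrow> real^'n^'n) \<Rightarrow> (nat \<Rightarrow> real^'m^'n) \<Rightarrow> (nat \<Rightarrow> real^'d^'n)
    \<Rightarrow> (nat \<Rightarrow> real^'n^'m) \<Rightarrow> (nat \<Rightarrow> real^'n^'p) \<Rightarrow> (nat \<Rightarrow> real^'m^'p) \<Rightarrow> (nat \<Rightarrow> real^'p)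
    \<Rightarrow> ('th \<Rightarrow> nat \<Rightarrow> real^'d) \<Rightarrow> nat
    \<Rightarrow> (nat \<Rightarrow> nat \<Rightarrow> real^'n) \<Rightarrow> (nat \<Rightarrow> nat \<Rightarrow> real^'m) \<Rightarrow> (nat \<Rightarrow> 'th)
    \<Rightarrow> nat \<Rightarrow> nat \<Rightarrow> (real^'n) set" where
  "safe_set A B C K F G f w T zs vs \<theta>s j k =
     {shift_z A B C K w (zs i) (\<theta>s i) (\<theta>s j) t k | i t.
        i < j \<and> t \<le> k \<and> \<theta>s j \<in> feas_W A B C K F G f w T (zs i) (vs i) (\<theta>s i) t}"

definition shift_cost :: "(nat \<Rightarrow> real^'n^'n) \<Rightarrow> (nat \<Rightarrow> real^'m^'n) \<Rightarrow> (nat \<Rightarrow> real^'d^'n)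
    \<Rightarrow> (nat \<Rightarrow> real^'n^'m) \<Rightarrow> ('th \<Rightarrow> nat \<Rightarrow> real^'d) \<Rightarrow> (nat \<Rightarrow> real^'n \<Rightarrow> real^'m \<Rightarrow> real)
    \<Rightarrow> nat \<Rightarrow> (nat \<Rightarrow> nat \<Rightarrow> real^'n) \<Rightarrow> (nat \<Rightarrow> nat \<Rightarrow> real^'m) \<Rightarrow> (nat \<Rightarrow> 'th)
    \<Rightarrow> nat \<Rightarrow> nat \<Rightarrow> nat \<Rightarrow> nat \<Rightarrow> real" where
  "shift_cost A B C K w l T zs vs \<theta>s i j t k =
     (\<Sum>r = k..T. l r (shift_z A B C K w (zs i) (\<theta>s i) (\<theta>s j) t r)
                    (shift_v A B C K w (vs i) (\<theta>s i) (\<theta>s j) t r))"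

definition Qcost :: "(nat \<Rightarrow> real^'n^'n) \<Rightarrow> (nat \<Rightarrow> real^'m^'n) \<Rightarrow> (nat \<Rightarrow> real^'d^'n)
    \<Rightarrow> (nat \<Rightarrow> real^'n^'m) \<Rightarrow> (nat \<Rightarrow> real^'n^'p) \<Rightarrow> (nat \<Rightarrow> real^'m^'p) \<Rightarrow> (nat \<Rightarrow> real^'p)
    \<Rightarrow> ('th \<Rightarrow> nat \<Rightarrow> real^'d) \<Rightarrow> (nat \<Rightarrow> real^'n \<Rightarrow> real^'m \<Rightarrow> real) \<Rightarrow> nat
    \<Rightarrow> (nat \<Rightarrow> nat \<Rightarrow> real^'n) \<Rightarrow> (nat \<Rightarrow> nat \<Rightarrow> real^'m) \<Rightarrow> (nat \<Rightarrow> 'th)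
    \<Rightarrow> nat \<Rightarrow> nat \<Rightarrow> real^'n \<Rightarrow> ereal" where
  "Qcost A B C K F G f w l T zs vs \<theta>s j k z =
     (if z \<in> safe_set A B C K F G f w T zs vs \<theta>s j k
      then ereal (Min {shift_cost A B C K w l T zs vs \<theta>s i j t k | i t.
             i < j \<and> t \<le> k \<and> \<theta>s j \<in> feas_W A B C K F G f w T (zs i) (vs i) (\<theta>s i) t
             \<and> shift_z A B C K w (zs i) (\<theta>s i) (\<theta>s j) t k = z})
      else \<infinity>)"

text \<open>Predicted nominal state: pred_z ... \<theta> t z V n = z_{t+n|t}, starting from z_{t|t} = z,
  with input sequence V (V k = v_{k|t}).\<close>
primrec pred_z :: "(nat \<Rightarrow> real^'n^'n) \<Rightarrow> (nat \<Rightarrow> real^'m^'n) \<Rightarrow> (nat \<Rightarrow> real^'d^'n)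
    \<Rightarrow> ('th \<Rightarrow> nat \<Rightarrow> real^'d) \<Rightarrow> 'th \<Rightarrow> nat \<Rightarrow> real^'n \<Rightarrow> (nat \<Rightarrow> real^'m) \<Rightarrow> nat \<Rightarrow> real^'n"
  where
  "pred_z A B C w \<theta> t z V 0 = z"
| "pred_z A B C w \<theta> t z V (Suc n) =
     A (t + n) *v pred_z A B C w \<theta> t z V n + B (t + n) *v V (t + n) + C (t + n) *v w \<theta> (t + n)"

definition lmpc_feasible :: "(nat \<Rightarrow> real^'n^'n) \<Rightarrow> (nat \<Rightarrow> real^'m^'n) \<Rightarrow> (nat \<Rightarrow> real^'d^'n)
    \<Rightarrow> (nat \<Rightarrow> real^'n^'m) \<Rightarrow> (nat \<Rightarrow> real^'n^'p) \<Rightarrow> (nat \<Rightarrow> real^'m^'p) \<Rightarrow> (nat \<Rightarrow> real^'p)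
    \<Rightarrow> ('th \<Rightarrow> nat \<Rightarrow> real^'d) \<Rightarrow> nat \<Rightarrow> nat
    \<Rightarrow> (nat \<Rightarrow> nat \<Rightarrow> real^'n) \<Rightarrow> (nat \<Rightarrow> nat \<Rightarrow> real^'m) \<Rightarrow> (nat \<Rightarrow> 'th)
    \<Rightarrow> nat \<Rightarrow> nat \<Rightarrow> real^'n \<Rightarrow> (nat \<Rightarrow> real^'m) \<Rightarrow> bool" where
  "lmpc_feasible A B C K F G f w T N zs vs \<theta>s j t z V \<longleftrightarrow>
     (\<forall>k\<in>{t..<t+N}. cons_ok F G f k (pred_z A B C w (\<theta>s j) t z V (k - t)) (V k)) \<and>
     pred_z A B C w (\<theta>s j) t z V N \<in> safe_set A B C K F G f w T zs vs \<theta>s j (t + N)"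

definition lmpc_cost :: "(nat \<Rightarrow> real^'n^'n) \<Rightarrow> (nat \<Rightarrow> real^'m^'n) \<Rightarrow> (nat \<Rightarrow> real^'d^'n)
    \<Rightarrow> (nat \<Rightarrow> real^'n^'m) \<Rightarrow> (nat \<Rightarrow> real^'n^'p) \<Rightarrow> (nat \<Rightarrow> real^'m^'p) \<Rightarrow> (nat \<Rightarrow> real^'p)
    \<Rightarrow> ('th \<Rightarrow> nat \<Rightarrow> real^'d) \<Rightarrow> (nat \<Rightarrow> real^'n \<Rightarrow> real^'m \<Rightarrow> real) \<Rightarrow> nat \<Rightarrow> nat
    \<Rightarrow> (nat \<Rightarrow> nat \<Rightarrow> real^'n) \<Rightarrow> (nat \<Rightarrow> nat \<Rightarrow> real^'m) \<Rightarrow> (nat \<Rightarrow> 'th)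
    \<Rightarrow> nat \<Rightarrow> nat \<Rightarrow> real^'n \<Rightarrow> (nat \<Rightarrow> real^'m) \<Rightarrow> ereal" where
  "lmpc_cost A B C K F G f w l T N zs vs \<theta>s j t z V =
     ereal (\<Sum>k = t..<t+N. l k (pred_z A B C w (\<theta>s j) t z V (k - t)) (V k))
     + Qcost A B C K F G f w l T zs vs \<theta>s j (t + N) (pred_z A B C w (\<theta>s j) t z V N)"

definition lmpc_optimal :: "(nat \<Rightarrow> real^'n^'n) \<Rightarrow> (nat \<Rightarrow> real^'m^'n) \<Rightarrow> (nat \<Rightarrow> real^'d^'n)
    \<Rightarrow> (nat \<Rightarrow> real^'n^'m) \<Rightarrow> (nat \<Rightarrow> real^'n^'p) \<Rightarrow> (nat \<Rightarrow> real^'m^'p) \<Rightarrow> (nat \<Rightarrow> real^'p)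
    \<Rightarrow> ('th \<Rightarrow> nat \<Rightarrow> real^'d) \<Rightarrow> (nat \<Rightarrow> real^'n \<Rightarrow> real^'m \<Rightarrow> real) \<Rightarrow> nat \<Rightarrow> nat
    \<Rightarrow> (nat \<Rightarrow> nat \<Rightarrow> real^'n) \<Rightarrow> (nat \<Rightarrow> nat \<Rightarrow> real^'m) \<Rightarrow> (nat \<Rightarrow> 'th)
    \<Rightarrow> nat \<Rightarrow> nat \<Rightarrow> real^'n \<Rightarrow> (nat \<Rightarrow> real^'m) \<Rightarrow> bool" where
  "lmpc_optimal A B C K F G f w l T N zs vs \<theta>s j t z V \<longleftrightarrow>
     lmpc_feasible A B C K F G f w T N zs vs \<theta>s j t z V \<and>
     (\<forall>V'. lmpc_feasible A B C K F G f w T N zs vs \<theta>s j t z V' \<longrightarrow>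
        lmpc_cost A B C K F G f w l T N zs vs \<theta>s j t z V \<le> lmpc_cost A B C K F G f w l T N zs vs \<theta>s j t z V')"

end

theory Submission
  imports Defs
begin

lemma shift_dyn:
  assumes dyn: "zi (Suc k) = A k *v zi k + B k *v vi k + C k *v w \<theta>i k" and tk: "t \<le> k"
  shows "shift_z A B C K w zi \<theta>i \<theta> t (Suc k) =
     A k *v shift_z A B C K w zi \<theta>i \<theta> t k + B k *v shift_v A B C K w vi \<theta>i \<theta> t k + C k *v w \<theta> k"
proof -
  have s: "Suc k - t = Suc (k - t)" "t + (k - t) = k" using tk by auto
  let ?e = "shift_err A B C K w \<theta> \<theta>i t (k - t)"
  have "shift_z A B C K w zi \<theta>i \<theta> t (Suc k) = zi (Suc k) + (Phi A B K k *v ?e + C k *v (w \<theta> k - w \<theta>i k))"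
    unfolding shift_z_def using s by simp
  also have "\<dots> = A k *v (zi k + ?e) + B k *v (vi k + K k *v ?e) + C k *v w \<theta> k"
    unfolding dyn Phi_def
    by (simp add: algebra_simps matrix_vector_mul_assoc)
  finally show ?thesis unfolding shift_z_def shift_v_def by simp
qed

lemma ssI:
  assumes "i < j" "s \<le> k" "\<theta>s j \<in> feas_W A B C K F G f w T (zs i) (vs i) (\<theta>s i) s"
  shows "shift_z A B C K w (zs i) (\<theta>s i) (\<theta>s j) s k \<in> safe_set A B C K F G f w T zs vs \<theta>s j k"
  unfolding safe_set_def using assms by blast

lemma pred_shift:
  assumes "\<And>k. Suc t \<le> k \<Longrightarrow> k < Suc t + n \<Longrightarrow> V' k = V k"
  shows "pred_z A B C w \<theta> (Suc t) (pred_z A B C w \<theta> t z V 1) V' n = pred_z A B C w \<theta> t z V (Suc n)"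
  using assms
proof (induction n)
  case 0
  then show ?case by simp
next
  case (Suc n)
  then have IH: "pred_z A B C w \<theta> (Suc t) (pred_z A B C w \<theta> t z V 1) V' n = pred_z A B C w \<theta> t z V (Suc n)"
    by simp
  have "V' (Suc t + n) = V (Suc t + n)" using Suc.prems by simp
  then show ?case using IH by simp
qed

lemma pred_eq_shift:
  assumes dyn: "\<And>k. k < T \<Longrightarrow> zi (Suc k) = A k *v zi k + B k *v vi k + C k *v w \<theta>i k"
  shows "n \<le> T \<Longrightarrow> pred_z A B C w \<theta> 0 z (\<lambda>k. shift_v A B C K w vi \<theta>i \<theta> 0 k) n
     = shift_z A B C K w zi \<theta>i \<theta> 0 n \<or> z \<noteq> zi 0"
proof (induction n)
  case 0
  then show ?case by (simp add: shift_z_def)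
next
  case (Suc n)
  show ?case
  proof (cases "z = zi 0")
    case True
    with Suc have IH: "pred_z A B C w \<theta> 0 z (\<lambda>k. shift_v A B C K w vi \<theta>i \<theta> 0 k) n
     = shift_z A B C K w zi \<theta>i \<theta> 0 n" by simp
    have "shift_z A B C K w zi \<theta>i \<theta> 0 (Suc n) =
     A n *v shift_z A B C K w zi \<theta>i \<theta> 0 n + B n *v shift_v A B C K w vi \<theta>i \<theta> 0 n + C n *v w \<theta> n"
      using shift_dyn[where zi=zi and k=n and t=0 and \<theta>=\<theta> and K=K and vi=vi and A=A and B=B and C=C and w=w and \<theta>i=\<theta>i] dyn[of n] Suc.prems by simp
    then show ?thesis using IH by simp
  qed simp
qed

theorem theorem1:
  fixes A :: "nat \<Rightarrow> real^'n^'n" and B :: "nat \<Rightarrow> real^'m^'n" and C :: "nat \<Rightarrow> real^'d^'n"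
    and K :: "nat \<Rightarrow> real^'n^'m"
    and F :: "nat \<Rightarrow> real^'n^'p" and G :: "nat \<Rightarrow> real^'m^'p" and f :: "nat \<Rightarrow> real^'p"
    and w :: "'th \<Rightarrow> nat \<Rightarrow> real^'d" and W\<theta> :: "'th set"
    and l :: "nat \<Rightarrow> real^'n \<Rightarrow> real^'m \<Rightarrow> real"
    and T N :: nat and xs :: "real^'n"
    and zs :: "nat \<Rightarrow> nat \<Rightarrow> real^'n" and vs :: "nat \<Rightarrow> nat \<Rightarrow> real^'m" and \<theta>s :: "nat \<Rightarrow> 'th"
  assumes hN: "1 \<le> N" "N \<le> T"
    and h\<theta>: "\<And>j. \<theta>s j \<in> W\<theta>"
    \<comment> \<open>assumption on iteration 0\<close>
    and h0_init: "zs 0 0 = xs"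
    and h0_dyn: "\<And>k. k < T \<Longrightarrow> zs 0 (Suc k) = A k *v zs 0 k + B k *v vs 0 k + C k *v w (\<theta>s 0) k"
    and h0_cons: "\<And>k. k \<le> T \<Longrightarrow> cons_ok F G f k (zs 0 k) (vs 0 k)"
    and h0_W: "\<And>t. t \<le> T \<Longrightarrow> W\<theta> \<subseteq> feas_W A B C K F G f w T (zs 0) (vs 0) (\<theta>s 0) t"
    \<comment> \<open>iterations j \<ge> 1 are closed loops of the LMPC scheme\<close>
    and hj_init: "\<And>j. 1 \<le> j \<Longrightarrow> zs j 0 = xs"
    and hj_dyn: "\<And>j k. 1 \<le> j \<Longrightarrow> k < T \<Longrightarrow>
        zs j (Suc k) = A k *v zs j k + B k *v vs j k + C k *v w (\<theta>s j) k"
    and hj_ctrl: "\<And>j t. 1 \<le> j \<Longrightarrow> t < T - N \<Longrightarrow>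
        (\<exists>V. lmpc_feasible A B C K F G f w T N zs vs \<theta>s j t (zs j t) V) \<Longrightarrow>
        (\<exists>V. lmpc_optimal A B C K F G f w l T N zs vs \<theta>s j t (zs j t) V \<and> vs j t = V t)"
    and hj_ctrl_last: "\<And>j. 1 \<le> j \<Longrightarrow>
        (\<exists>V. lmpc_feasible A B C K F G f w T N zs vs \<theta>s j (T - N) (zs j (T - N)) V) \<Longrightarrow>
        (\<exists>V. lmpc_optimal A B C K F G f w l T N zs vs \<theta>s j (T - N) (zs j (T - N)) V \<and>
             (\<forall>k\<in>{T - N..<T}. vs j k = V k))"
  shows "\<forall>j\<ge>1. \<forall>t\<le>T - N. \<exists>V. lmpc_feasible A B C K F G f w T N zs vs \<theta>s j t (zs j t) V"
proof (intro allI impI)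
  fix j t :: nat
  assume j: "1 \<le> j" and tT: "t \<le> T - N"
  have dynall: "\<And>i k. k < T \<Longrightarrow> zs i (Suc k) = A k *v zs i k + B k *v vs i k + C k *v w (\<theta>s i) k"
  proof -
    fix i k :: nat assume "k < T"
    then show "zs i (Suc k) = A k *v zs i k + B k *v vs i k + C k *v w (\<theta>s i) k"
      using h0_dyn hj_dyn[of i k] by (cases "i = 0") auto
  qed
  show "\<exists>V. lmpc_feasible A B C K F G f w T N zs vs \<theta>s j t (zs j t) V"
    using tT
  proof (induction t)
    case 0
    let ?V = "\<lambda>k. shift_v A B C K w (vs 0) (\<theta>s 0) (\<theta>s j) 0 k"
    have feas: "\<theta>s j \<in> feas_W A B C K F G f w T (zs 0) (vs 0) (\<theta>s 0) 0"
      using h0_W h\<theta> by blast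
    have pe: "\<And>n. n \<le> T \<Longrightarrow> pred_z A B C w (\<theta>s j) 0 (zs j 0) ?V n = shift_z A B C K w (zs 0) (\<theta>s 0) (\<theta>s j) 0 n"
    proof -
      fix n :: nat assume "n \<le> T"
      moreover have "zs j 0 = zs 0 0" using hj_init[OF j] h0_init by simp
      ultimately show "pred_z A B C w (\<theta>s j) 0 (zs j 0) ?V n = shift_z A B C K w (zs 0) (\<theta>s 0) (\<theta>s j) 0 n"
        using pred_eq_shift[where zi="zs 0" and vi="vs 0" and \<theta>i="\<theta>s 0" and T=T and n=n and \<theta>="\<theta>s j" and z="zs j 0" and K=K and A=A and B=B and C=C and w=w, OF dynall]
        by simp
    qed
    have "lmpc_feasible A B C K F G f w T N zs vs \<theta>s j 0 (zs j 0) ?V"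
      unfolding lmpc_feasible_def
    proof
      show "\<forall>k\<in>{0..<0 + N}. cons_ok F G f k (pred_z A B C w (\<theta>s j) 0 (zs j 0) ?V (k - 0)) (?V k)"
        using feas hN pe unfolding feas_W_def by auto
      show "pred_z A B C w (\<theta>s j) 0 (zs j 0) ?V N \<in> safe_set A B C K F G f w T zs vs \<theta>s j (0 + N)"
        unfolding pe[OF hN(2)] using ssI[where A=A and B=B and C=C and K=K and F=F and G=G and f=f and w=w and T=T and zs=zs and vs=vs and \<theta>s=\<theta>s and i=0 and j=j and s=0 and k=N] feas j by simp
    qed
    then show ?case by blast
  next
    case (Suc t)
    then have tl: "t < T - N" by simp
    obtain V0 where "lmpc_feasible A B C K F G f w T N zs vs \<theta>s j t (zs j t) V0"
      using Suc by auto
    then obtain V where opt: "lmpc_optimal A B C K F G f w l T N zs vs \<theta>s j t (zs j t) V" and vt: "vs j t = V t"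
      using hj_ctrl[OF j tl] by blast
    from opt have fe: "lmpc_feasible A B C K F G f w T N zs vs \<theta>s j t (zs j t) V"
      unfolding lmpc_optimal_def by blast
    let ?P = "pred_z A B C w (\<theta>s j) t (zs j t) V"
    have cons: "\<And>k. t \<le> k \<Longrightarrow> k < t + N \<Longrightarrow> cons_ok F G f k (?P (k - t)) (V k)"
      using fe unfolding lmpc_feasible_def by auto
    have "?P N \<in> safe_set A B C K F G f w T zs vs \<theta>s j (t + N)"
      using fe unfolding lmpc_feasible_def by blast
    then obtain i s where i: "i < j" and s: "s \<le> t + N"
      and fw: "\<theta>s j \<in> feas_W A B C K F G f w T (zs i) (vs i) (\<theta>s i) s"
      and PN: "?P N = shift_z A B C K w (zs i) (\<theta>s i) (\<theta>s j) s (t + N)"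
      unfolding safe_set_def by blast
    have zs1: "zs j (Suc t) = ?P 1"
      using hj_dyn[OF j, of t] vt tl by simp
    define V' where "V' = V(t + N := shift_v A B C K w (vs i) (\<theta>s i) (\<theta>s j) s (t + N))"
    have agree: "\<And>n k. n < N \<Longrightarrow> Suc t \<le> k \<Longrightarrow> k < Suc t + n \<Longrightarrow> V' k = V k"
      unfolding V'_def by auto
    have P'eq: "\<And>n. n < N \<Longrightarrow> pred_z A B C w (\<theta>s j) (Suc t) (zs j (Suc t)) V' n = ?P (Suc n)"
      unfolding zs1 by (rule pred_shift) (rule agree, auto)
    have tN: "t + N < T" using tl by simp
    have "lmpc_feasible A B C K F G f w T N zs vs \<theta>s j (Suc t) (zs j (Suc t)) V'"
      unfolding lmpc_feasible_def
    proof
      show "\<forall>k\<in>{Suc t..<Suc t + N}. cons_ok F G f k (pred_z A B C w (\<theta>s j) (Suc t) (zs j (Suc t)) V' (k - Suc t)) (V' k)"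
      proof
        fix k assume k: "k \<in> {Suc t..<Suc t + N}"
        show "cons_ok F G f k (pred_z A B C w (\<theta>s j) (Suc t) (zs j (Suc t)) V' (k - Suc t)) (V' k)"
        proof (cases "k = t + N")
          case True
          have "k - Suc t < N" using k by auto
          then have "pred_z A B C w (\<theta>s j) (Suc t) (zs j (Suc t)) V' (k - Suc t) = ?P N"
            using P'eq[of "k - Suc t"] True hN by simp
          moreover have "k \<in> {s..T}" using True s tN by auto
          ultimately show ?thesis using fw PN True unfolding feas_W_def V'_def by auto
        next
          case False
          have "k - Suc t < N" using k by auto
          then have "pred_z A B C w (\<theta>s j) (Suc t) (zs j (Suc t)) V' (k - Suc t) = ?P (Suc (k - Suc t))"
            using P'eq by blast
          moreover have "Suc (k - Suc t) = k - t" using k by auto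
          moreover have "V' k = V k" using False unfolding V'_def by simp
          ultimately show ?thesis using cons[of k] k False by auto
        qed
      qed
      have "N - 1 < N" using hN by simp
      then have last: "pred_z A B C w (\<theta>s j) (Suc t) (zs j (Suc t)) V' (N - 1) = ?P N"
        using P'eq[of "N - 1"] hN by simp
      obtain N' where N': "N = Suc N'" using hN by (cases N) auto
      have "pred_z A B C w (\<theta>s j) (Suc t) (zs j (Suc t)) V' N =
         A (t + N) *v ?P N + B (t + N) *v shift_v A B C K w (vs i) (\<theta>s i) (\<theta>s j) s (t + N) + C (t + N) *v w (\<theta>s j) (t + N)"
        using last unfolding N' V'_def by simp
      also have "\<dots> = shift_z A B C K w (zs i) (\<theta>s i) (\<theta>s j) s (Suc (t + N))"
        unfolding PN using shift_dyn[where zi="zs i" and vi="vs i" and k="t+N" and A=A and B=B and C=C and K=K and w=w and \<theta>i="\<theta>s i" and \<theta>="\<theta>s j" and t=s, OF dynall[of "t+N" i, OF tN]] s by simp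
      finally have eq: "pred_z A B C w (\<theta>s j) (Suc t) (zs j (Suc t)) V' N = shift_z A B C K w (zs i) (\<theta>s i) (\<theta>s j) s (Suc t + N)"
        by simp
      show "pred_z A B C w (\<theta>s j) (Suc t) (zs j (Suc t)) V' N \<in> safe_set A B C K F G f w T zs vs \<theta>s j (Suc t + N)"
        unfolding eq using ssI[where A=A and B=B and C=C and K=K and F=F and G=G and f=f and w=w and T=T and zs=zs and vs=vs and \<theta>s=\<theta>s and i=i and j=j and s=s and k="Suc t + N"] i s fw by simp
    qed
    then show ?case by blast
  qed
qed

end
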